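(* Let $u$ be a sufficiently regular function on $\mathcal{K}_{[s_0,s_1]}$, let $0\le k\le p$ and let $Z^K$ be any composition, in any order, of $p-k$ partial derivatives $\partial_\alpha$ and $k$ boosts $L_a$. Then, with a constant $C$ depending only on $p$, for all $\alpha,\beta\in\{0,1,2\}$, $$(s/t)^2|\partial_\alpha\partial_\beta Z^Ku|\le C|\Box u|_{p,k}+Ct^{-1}|\partial u|_{p+1,k+1},$$ and $$(s/t)^2|\partial\partial u|_{p,k}\le C|\Box u|_{p,k}+Ct^{-1}|\partial u|_{p+1,k+1}.$$
   Context: Coordinates $(t,x)$, $r=|x|$, $s=\sqrt{t^2-r^2}$, $\Box=\partial_t^2-\partial_1^2-\partial_2^2$, $\partial_0=\partial_t$, $L_a=x^a\partial_t+t\partial_a$ ($a=1,2$). $\mathcal{K}_{[s_0,s_1]}=\{(t,x): t>r+1,\ s_0^2\le t^2-r^2\le s_1^2\}$. For a function $w$: $|w|_{p,k}:=\max|Z^Kw|$ over all compositions $Z^K$, in any order, of $i$ partial derivatives and $j$ boosts with $i+j\le p$, $j\le k$; $|\partial w|_{p,k}:=\max_\alpha|\partial_\alpha w|_{p,k}$; $|\partial\partial w|_{p,k}:=\max_{\alpha,\beta}|\partial_\alpha\partial_\beta w|_{p,k}$. *)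

theory Defs
  imports "HOL-Analysis.Analysis"
begin

text \<open>Points of R^{1+2} as triples (t, x1, x2). Coordinate 0 is t, coordinates 1,2 are x^1, x^2.\<close>
type_synonym pt = "real \<times> real \<times> real"

definition coord :: "nat \<Rightarrow> pt \<Rightarrow> real" where
  "coord i y = (if i = 0 then fst y else if i = 1 then fst (snd y) else if i = 2 then snd (snd y) else 0)"

definition unitv :: "nat \<Rightarrow> pt" where
  "unitv i = (if i = 0 then (1,0,0) else if i = 1 then (0,1,0) else if i = 2 then (0,0,1) else (0,0,0))"

definition pd :: "nat \<Rightarrow> (pt \<Rightarrow> real) \<Rightarrow> pt \<Rightarrow> real" where
  "pd i w y = deriv (\<lambda>h. w (y + h *\<^sub>R unitv i)) 0"

fun iter_pd :: "nat list \<Rightarrow> (pt \<Rightarrow> real) \<Rightarrow> pt \<Rightarrow> real" where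
  "iter_pd [] w = w"
| "iter_pd (i # is) w = pd i (iter_pd is w)"

definition regular_on :: "pt set \<Rightarrow> (pt \<Rightarrow> real) \<Rightarrow> bool" where
  "regular_on U w \<longleftrightarrow> (\<forall>is. set is \<subseteq> {0,1,2} \<longrightarrow> iter_pd is w differentiable_on U)"

definition Kset :: "real \<Rightarrow> real \<Rightarrow> pt set" where
  "Kset s0 s1 = {(t, x1, x2). t > sqrt (x1\<^sup>2 + x2\<^sup>2) + 1 \<and>
       s0\<^sup>2 \<le> t\<^sup>2 - (x1\<^sup>2 + x2\<^sup>2) \<and> t\<^sup>2 - (x1\<^sup>2 + x2\<^sup>2) \<le> s1\<^sup>2}"

definition wave :: "(pt \<Rightarrow> real) \<Rightarrow> pt \<Rightarrow> real" where
  "wave w y = pd 0 (pd 0 w) y - pd 1 (pd 1 w) y - pd 2 (pd 2 w) y"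

datatype vf = D nat | L nat

definition valid_vf :: "vf set" where
  "valid_vf = D ` {0,1,2} \<union> L ` {1,2}"

fun apply_vf :: "vf \<Rightarrow> (pt \<Rightarrow> real) \<Rightarrow> pt \<Rightarrow> real" where
  "apply_vf (D i) w = pd i w"
| "apply_vf (L a) w = (\<lambda>y. coord a y * pd 0 w y + coord 0 y * pd a w y)"

definition applyZ :: "vf list \<Rightarrow> (pt \<Rightarrow> real) \<Rightarrow> pt \<Rightarrow> real" where
  "applyZ zs w = foldr apply_vf zs w"

definition is_boost :: "vf \<Rightarrow> bool" where
  "is_boost z = (case z of L _ \<Rightarrow> True | D _ \<Rightarrow> False)"

definition nboost :: "vf list \<Rightarrow> nat" where
  "nboost zs = length (filter is_boost zs)"

definition adm :: "nat \<Rightarrow> nat \<Rightarrow> vf list set" where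
  "adm p k = {zs. set zs \<subseteq> valid_vf \<and> length zs \<le> p \<and> nboost zs \<le> k}"

text \<open>|w|_{p,k}, |\<partial>w|_{p,k}, |\<partial>\<partial>w|_{p,k} evaluated at a point.\<close>
definition normpk :: "nat \<Rightarrow> nat \<Rightarrow> (pt \<Rightarrow> real) \<Rightarrow> pt \<Rightarrow> real" where
  "normpk p k w y = Max ((\<lambda>zs. \<bar>applyZ zs w y\<bar>) ` adm p k)"

definition normD :: "nat \<Rightarrow> nat \<Rightarrow> (pt \<Rightarrow> real) \<Rightarrow> pt \<Rightarrow> real" where
  "normD p k w y = Max ((\<lambda>a. normpk p k (pd a w) y) ` {0,1,2})"

definition normDD :: "nat \<Rightarrow> nat \<Rightarrow> (pt \<Rightarrow> real) \<Rightarrow> pt \<Rightarrow> real" where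
  "normDD p k w y = Max ((\<lambda>(a,b). normpk p k (pd a (pd b w)) y) ` ({0,1,2} \<times> {0,1,2}))"

end

theory Submission
  imports Defs
begin

lemma norm_unitv: "norm (unitv i) \<le> 1"
  by (simp add: unitv_def zero_prod_def norm_Pair)

lemma line_deriv:
  assumes "(f has_derivative F) (at (z + s0 *\<^sub>R e))"
  shows "((\<lambda>s. f (z + s *\<^sub>R e)) has_real_derivative F e) (at s0)"
proof -
  have 1: "((\<lambda>s. z + s *\<^sub>R e) has_derivative (\<lambda>h. h *\<^sub>R e)) (at s0)"
    by (auto intro!: derivative_eq_intros)
  have "((f \<circ> (\<lambda>s. z + s *\<^sub>R e)) has_derivative (F \<circ> (\<lambda>h. h *\<^sub>R e))) (at s0)"
    by (rule diff_chain_at[OF 1 assms])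
  moreover have "F \<circ> (\<lambda>h. h *\<^sub>R e) = (*) (F e)"
    using has_derivative_linear[OF assms] by (auto simp: linear_cmul)
  ultimately show ?thesis by (simp add: has_field_derivative_def o_def)
qed

lemma pd_has_derivative:
  assumes "(f has_derivative F) (at y)"
  shows "pd i f y = F (unitv i)"
proof -
  have "((\<lambda>s. f (y + s *\<^sub>R unitv i)) has_real_derivative F (unitv i)) (at 0)"
    using line_deriv[of f F y 0 "unitv i"] assms by simp
  then show ?thesis unfolding pd_def by (rule DERIV_imp_deriv)
qed

lemma line_deriv_pd:
  assumes "f differentiable (at (z + s0 *\<^sub>R unitv i))"
  shows "((\<lambda>s. f (z + s *\<^sub>R unitv i)) has_real_derivative pd i f (z + s0 *\<^sub>R unitv i)) (at s0)"
proof -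
  obtain F where F: "(f has_derivative F) (at (z + s0 *\<^sub>R unitv i))"
    using assms by (auto simp: differentiable_def)
  show ?thesis using line_deriv[OF F] pd_has_derivative[OF F] by simp
qed

lemma schwarz_approx:
  assumes U: "open U" "y \<in> U" and fd: "f differentiable_on U"
    and gd: "pd i f differentiable (at y)"
    and e: "e > 0"
  shows "\<exists>\<delta>>0. \<forall>h. 0 < h \<and> h < \<delta> \<longrightarrow>
     \<bar>(f (y + h *\<^sub>R unitv i + h *\<^sub>R unitv j) - f (y + h *\<^sub>R unitv i) - f (y + h *\<^sub>R unitv j) + f y)
       - h\<^sup>2 * pd j (pd i f) y\<bar> \<le> 3 * e * h\<^sup>2"
proof -
  define g where "g = pd i f"
  obtain G where G: "(g has_derivative G) (at y)" using gd by (auto simp: differentiable_def g_def)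
  have A: "pd j g y = G (unitv j)" using pd_has_derivative[OF G] .
  have lin: "linear G" using has_derivative_linear[OF G] .
  obtain d where d: "d > 0" "\<forall>z. norm (z - y) < d \<longrightarrow> norm (g z - g y - G (z - y)) \<le> e * norm (z - y)"
    using G e unfolding has_derivative_at_alt by blast
  obtain r where r: "r > 0" "ball y r \<subseteq> U" using U open_contains_ball by blast
  define \<delta> where "\<delta> = min d r / 2"
  have \<delta>: "\<delta> > 0" using d r by (simp add: \<delta>_def)
  show ?thesis
  proof (intro exI[of _ \<delta>] conjI allI impI \<delta>)
    fix h :: real assume h: "0 < h \<and> h < \<delta>"
    define ei where "ei = unitv i"
    define ej where "ej = unitv j"
    have nei: "norm ei \<le> 1" "norm ej \<le> 1" using norm_unitv by (auto simp: ei_def ej_def)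
    have inU: "y + v \<in> U" if "norm v < r" for v
      using r that by (auto simp: dist_norm intro!: subsetD[OF r(2)])
    define q where "q = (\<lambda>s. f (y + h *\<^sub>R ej + s *\<^sub>R ei) - f (y + s *\<^sub>R ei))"
    have nb: "norm (s *\<^sub>R ei + h *\<^sub>R ej) \<le> 2 * h" "norm (s *\<^sub>R ei) \<le> h" if "0 \<le> s" "s \<le> h" for s
    proof -
      have "norm (s *\<^sub>R ei + h *\<^sub>R ej) \<le> norm (s *\<^sub>R ei) + norm (h *\<^sub>R ej)" by (rule norm_triangle_ineq)
      also have "\<dots> \<le> s + h"
      proof (intro add_mono)
        show "norm (s *\<^sub>R ei) \<le> s" using nei that mult_left_le[of "norm ei" s] by simp
        show "norm (h *\<^sub>R ej) \<le> h" using nei that h mult_left_le[of "norm ej" h] by simp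
      qed
      finally show "norm (s *\<^sub>R ei + h *\<^sub>R ej) \<le> 2 * h" using that by simp
      show "norm (s *\<^sub>R ei) \<le> h" using nei that h mult_left_le[of "norm ei" s] by simp
    qed
    have hr: "2 * h < r" "2 * h < d" using h by (auto simp: \<delta>_def)
    have qd: "DERIV q s :> (g (y + h *\<^sub>R ej + s *\<^sub>R ei) - g (y + s *\<^sub>R ei))" if "0 \<le> s" "s \<le> h" for s
    proof -
      have u1: "y + h *\<^sub>R ej + s *\<^sub>R ei \<in> U"
        using inU[of "s *\<^sub>R ei + h *\<^sub>R ej"] nb[OF that] hr by (simp add: algebra_simps)
      have u2: "y + s *\<^sub>R ei \<in> U"
      proof -
        have "norm (s *\<^sub>R ei) < r" using nb(2)[OF that] hr h by linarith
        then show ?thesis using inU[of "s *\<^sub>R ei"] by simp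
      qed
      have d1: "f differentiable (at (y + h *\<^sub>R ej + s *\<^sub>R ei))"
        using fd u1 U(1) differentiable_on_eq_differentiable_at by blast
      have d2: "f differentiable (at (y + s *\<^sub>R ei))"
        using fd u2 U(1) differentiable_on_eq_differentiable_at by blast
      show ?thesis unfolding q_def g_def ei_def
        by (intro derivative_intros line_deriv_pd) (use d1 d2 in \<open>auto simp: ei_def\<close>)
    qed
    obtain \<xi> where xi: "0 < \<xi>" "\<xi> < h" "q h - q 0 = (h - 0) * (g (y + h *\<^sub>R ej + \<xi> *\<^sub>R ei) - g (y + \<xi> *\<^sub>R ei))"
      using MVT2[of 0 h q, OF _ qd] h by auto
    define v1 where "v1 = \<xi> *\<^sub>R ei + h *\<^sub>R ej"
    define v2 where "v2 = \<xi> *\<^sub>R ei"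
    have nv1: "norm v1 \<le> 2 * h" and nv2: "norm v2 \<le> h" using nb[of \<xi>] xi by (auto simp: v1_def v2_def)
    have e1: "norm (g (y + v1) - g y - G v1) \<le> e * norm v1"
      using d(2)[rule_format, of "y + v1"] nv1 hr by simp
    have e2: "norm (g (y + v2) - g y - G v2) \<le> e * norm v2"
      using d(2)[rule_format, of "y + v2"] nv2 hr h by simp
    have Gv: "G v1 - G v2 = h * G ej"
      unfolding v1_def v2_def using lin by (simp add: linear_add linear_cmul)
    have "g (y + h *\<^sub>R ej + \<xi> *\<^sub>R ei) - g (y + \<xi> *\<^sub>R ei) - h * G ej
        = (g (y + v1) - g y - G v1) - (g (y + v2) - g y - G v2)"
      using Gv by (simp add: v1_def v2_def algebra_simps)
    then have "\<bar>g (y + h *\<^sub>R ej + \<xi> *\<^sub>R ei) - g (y + \<xi> *\<^sub>R ei) - h * G ej\<bar> \<le> e * norm v1 + e * norm v2"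
      using e1 e2 by (simp add: abs_diff_le_iff) linarith
    also have "\<dots> \<le> e * (2*h) + e * h" using nv1 nv2 e by (intro add_mono mult_left_mono) auto
    finally have bnd: "\<bar>g (y + h *\<^sub>R ej + \<xi> *\<^sub>R ei) - g (y + \<xi> *\<^sub>R ei) - h * G ej\<bar> \<le> 3 * e * h" by simp
    have "f (y + h *\<^sub>R ei + h *\<^sub>R ej) - f (y + h *\<^sub>R ei) - f (y + h *\<^sub>R ej) + f y - h\<^sup>2 * G ej
        = h * (g (y + h *\<^sub>R ej + \<xi> *\<^sub>R ei) - g (y + \<xi> *\<^sub>R ei) - h * G ej)"
      using xi(3) by (simp add: q_def algebra_simps power2_eq_square)
    then have "\<bar>f (y + h *\<^sub>R ei + h *\<^sub>R ej) - f (y + h *\<^sub>R ei) - f (y + h *\<^sub>R ej) + f y - h\<^sup>2 * G ej\<bar>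
        = h * \<bar>g (y + h *\<^sub>R ej + \<xi> *\<^sub>R ei) - g (y + \<xi> *\<^sub>R ei) - h * G ej\<bar>"
      using h by (simp add: abs_mult)
    also have "\<dots> \<le> h * (3 * e * h)" using bnd h by (intro mult_left_mono) auto
    finally show "\<bar>(f (y + h *\<^sub>R unitv i + h *\<^sub>R unitv j) - f (y + h *\<^sub>R unitv i) - f (y + h *\<^sub>R unitv j) + f y)
       - h\<^sup>2 * pd j (pd i f) y\<bar> \<le> 3 * e * h\<^sup>2"
      using A by (simp add: g_def ei_def ej_def power2_eq_square algebra_simps)
  qed
qed

lemma schwarz:
  assumes U: "open U" "y \<in> U" and fd: "f differentiable_on U"
    and gi: "pd i f differentiable (at y)" and gj: "pd j f differentiable (at y)"
  shows "pd j (pd i f) y = pd i (pd j f) y"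
proof (rule ccontr)
  define A where "A = pd j (pd i f) y"
  define B where "B = pd i (pd j f) y"
  assume "pd j (pd i f) y \<noteq> pd i (pd j f) y"
  then have ne: "A \<noteq> B" by (simp add: A_def B_def)
  define e where "e = \<bar>A - B\<bar> / 12"
  have e: "e > 0" using ne by (simp add: e_def)
  obtain d1 where d1: "d1 > 0" "\<forall>h. 0 < h \<and> h < d1 \<longrightarrow>
     \<bar>(f (y + h *\<^sub>R unitv i + h *\<^sub>R unitv j) - f (y + h *\<^sub>R unitv i) - f (y + h *\<^sub>R unitv j) + f y)
       - h\<^sup>2 * A\<bar> \<le> 3 * e * h\<^sup>2"
    using schwarz_approx[OF U fd gi e, of j] by (auto simp: A_def)
  obtain d2 where d2: "d2 > 0" "\<forall>h. 0 < h \<and> h < d2 \<longrightarrow>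
     \<bar>(f (y + h *\<^sub>R unitv j + h *\<^sub>R unitv i) - f (y + h *\<^sub>R unitv j) - f (y + h *\<^sub>R unitv i) + f y)
       - h\<^sup>2 * B\<bar> \<le> 3 * e * h\<^sup>2"
    using schwarz_approx[OF U fd gj e, of i] by (auto simp: B_def)
  define h where "h = min d1 d2 / 2"
  have h: "0 < h" "h < d1" "h < d2" using d1 d2 by (auto simp: h_def)
  have 1: "\<bar>(f (y + h *\<^sub>R unitv i + h *\<^sub>R unitv j) - f (y + h *\<^sub>R unitv i) - f (y + h *\<^sub>R unitv j) + f y)
       - h\<^sup>2 * A\<bar> \<le> 3 * e * h\<^sup>2" using d1 h by blast
  have 2: "\<bar>(f (y + h *\<^sub>R unitv i + h *\<^sub>R unitv j) - f (y + h *\<^sub>R unitv i) - f (y + h *\<^sub>R unitv j) + f y)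
       - h\<^sup>2 * B\<bar> \<le> 3 * e * h\<^sup>2" using d2(2)[rule_format, of h] h by (simp add: add_ac)
  have "\<bar>h\<^sup>2 * (A - B)\<bar> \<le> 6 * e * h\<^sup>2" using 1 2 by (simp add: abs_le_iff algebra_simps)
  then have "h\<^sup>2 * \<bar>A - B\<bar> \<le> h\<^sup>2 * (6 * e)" by (simp add: abs_mult mult.commute)
  then have "\<bar>A - B\<bar> \<le> 6 * e" using h by (simp add: mult_le_cancel_left)
  then show False using e by (simp add: e_def)
qed


lemma pd_local:
  assumes U: "open U" and eq: "\<And>z. z \<in> U \<Longrightarrow> f z = g z" and y: "y \<in> U"
  shows "pd i f y = pd i g y"
proof -
  define V where "V = (\<lambda>h. y + h *\<^sub>R unitv i) -` U"
  have "open V" unfolding V_def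
    by (rule continuous_open_vimage[OF U]) (auto intro!: continuous_intros)
  moreover have "0 \<in> V" using y by (simp add: V_def)
  ultimately have ev: "eventually (\<lambda>h. h \<in> V) (nhds 0)" by (rule eventually_nhds_in_open)
  have "eventually (\<lambda>h. f (y + h *\<^sub>R unitv i) = g (y + h *\<^sub>R unitv i)) (nhds 0)"
    by (rule eventually_mono[OF ev]) (auto simp: V_def eq)
  then show ?thesis unfolding pd_def by (rule deriv_cong_ev) simp
qed

lemma diff_on_cong:
  assumes "open U" "\<And>z. z \<in> U \<Longrightarrow> f z = g z" "f differentiable_on U"
  shows "g differentiable_on U"
  using assms unfolding differentiable_on_eq_differentiable_at[OF assms(1)] differentiable_def
  by (meson has_derivative_transform_within_open)

lemma diffat: "open U \<Longrightarrow> f differentiable_on U \<Longrightarrow> y \<in> U \<Longrightarrow> f differentiable (at y)"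
  using differentiable_on_eq_differentiable_at by blast

lemma pd_add:
  assumes "f differentiable (at y)" "g differentiable (at y)"
  shows "pd i (\<lambda>z. f z + g z) y = pd i f y + pd i g y"
proof -
  obtain F G where F: "(f has_derivative F) (at y)" and G: "(g has_derivative G) (at y)"
    using assms by (auto simp: differentiable_def)
  show ?thesis using pd_has_derivative[OF has_derivative_add[OF F G]]
      pd_has_derivative[OF F] pd_has_derivative[OF G] by simp
qed

lemma pd_diff:
  assumes "f differentiable (at y)" "g differentiable (at y)"
  shows "pd i (\<lambda>z. f z - g z) y = pd i f y - pd i g y"
proof -
  obtain F G where F: "(f has_derivative F) (at y)" and G: "(g has_derivative G) (at y)"
    using assms by (auto simp: differentiable_def)
  show ?thesis using pd_has_derivative[OF has_derivative_diff[OF F G]]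
      pd_has_derivative[OF F] pd_has_derivative[OF G] by simp
qed

lemma pd_mult:
  assumes "f differentiable (at y)" "g differentiable (at y)"
  shows "pd i (\<lambda>z. f z * g z) y = pd i f y * g y + f y * pd i g y"
proof -
  obtain F G where F: "(f has_derivative F) (at y)" and G: "(g has_derivative G) (at y)"
    using assms by (auto simp: differentiable_def)
  show ?thesis using pd_has_derivative[OF has_derivative_mult[OF F G]]
      pd_has_derivative[OF F] pd_has_derivative[OF G] by (simp add: mult.commute)
qed

lemma pd_const: "pd i (\<lambda>z. c) y = 0"
  unfolding pd_def by simp

lemma bl_coord: "bounded_linear (coord a)"
proof -
  have "coord a = (if a = 0 then fst else if a = 1 then fst \<circ> snd else if a = 2 then snd \<circ> snd else (\<lambda>_. 0))"
    by (auto simp: coord_def fun_eq_iff)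
  then show ?thesis
    by (auto intro!: bounded_linear_compose[OF bounded_linear_fst] bounded_linear_compose[OF bounded_linear_snd]
        bounded_linear_fst bounded_linear_snd simp: o_def)
qed

lemma coord_diff: "coord a differentiable (at y)"
  by (rule bounded_linear_imp_differentiable[OF bl_coord])

lemma coord_diff_on: "coord a differentiable_on U"
  by (rule bounded_linear_imp_differentiable_on[OF bl_coord])

lemma pd_coord: "a \<in> {0,1,2} \<Longrightarrow> c \<in> {0,1,2} \<Longrightarrow> pd c (coord a) y = (if c = a then 1 else 0)"
proof -
  assume "a \<in> {0,1,2}" "c \<in> {0,1,2}"
  have "pd c (coord a) y = coord a (unitv c)"
    using pd_has_derivative[OF bounded_linear.has_derivative[OF bl_coord has_derivative_ident]] by simp
  moreover have "coord a (unitv c) = (if c = a then 1 else 0)"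
    using \<open>a \<in> {0,1,2}\<close> \<open>c \<in> {0,1,2}\<close> by (auto simp: coord_def unitv_def)
  ultimately show ?thesis by (rule trans)
qed

lemma pd_coord_mult:
  assumes "H differentiable (at y)" "a \<in> {0,1,2}" "c \<in> {0,1,2}"
  shows "pd c (\<lambda>z. coord a z * H z) y = (if c = a then H y else 0) + coord a y * pd c H y"
  using pd_mult[OF coord_diff assms(1)] pd_coord[OF assms(2,3)] by simp

lemma iter_pd_append: "iter_pd (xs @ ys) f = iter_pd xs (iter_pd ys f)"
  by (induction xs) auto

definition regn :: "pt set \<Rightarrow> nat \<Rightarrow> (pt \<Rightarrow> real) \<Rightarrow> bool" where
  "regn U n f \<longleftrightarrow> (\<forall>js. set js \<subseteq> {0,1,2} \<and> length js < n \<longrightarrow> iter_pd js f differentiable_on U)"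

lemma regular_regn: "regular_on U f \<Longrightarrow> regn U n f"
  by (auto simp: regular_on_def regn_def)

lemma regn_mono: "regn U n f \<Longrightarrow> m \<le> n \<Longrightarrow> regn U m f"
  by (auto simp: regn_def)

lemma regn_regular: "(\<And>n. regn U n f) \<Longrightarrow> regular_on U f"
  unfolding regular_on_def regn_def by (metis lessI)

lemma iter_local:
  assumes "open U" "\<And>z. z \<in> U \<Longrightarrow> f z = g z" "y \<in> U"
  shows "iter_pd js f y = iter_pd js g y"
  using assms(3)
proof (induction js arbitrary: y)
  case Nil then show ?case using assms by simp
next
  case (Cons i js)
  show ?case using pd_local[OF assms(1) Cons.IH Cons.prems] by simp
qed

lemma iter_add:
  assumes U: "open U" and rf: "regn U (length js) f" and rg: "regn U (length js) g"
    and js: "set js \<subseteq> {0,1,2}" and y: "y \<in> U"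
  shows "iter_pd js (\<lambda>z. f z + g z) y = iter_pd js f y + iter_pd js g y"
  using rf rg js y
proof (induction js arbitrary: y)
  case Nil then show ?case by simp
next
  case (Cons i js)
  have r: "regn U (length js) f" "regn U (length js) g"
    using Cons.prems regn_mono by auto
  have d: "iter_pd js f differentiable (at y)" "iter_pd js g differentiable (at y)"
    using Cons.prems U by (auto simp: regn_def intro!: diffat)
  have "iter_pd (i # js) (\<lambda>z. f z + g z) y = pd i (\<lambda>z. iter_pd js f z + iter_pd js g z) y"
    using pd_local[OF U Cons.IH[OF r] Cons.prems(4)] Cons.prems by simp
  also have "\<dots> = iter_pd (i # js) f y + iter_pd (i # js) g y"
    using pd_add[OF d] by simp
  finally show ?case .
qed

lemma iter_diff:
  assumes U: "open U" and rf: "regn U (length js) f" and rg: "regn U (length js) g"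
    and js: "set js \<subseteq> {0,1,2}" and y: "y \<in> U"
  shows "iter_pd js (\<lambda>z. f z - g z) y = iter_pd js f y - iter_pd js g y"
  using rf rg js y
proof (induction js arbitrary: y)
  case Nil then show ?case by simp
next
  case (Cons i js)
  have r: "regn U (length js) f" "regn U (length js) g"
    using Cons.prems regn_mono by auto
  have d: "iter_pd js f differentiable (at y)" "iter_pd js g differentiable (at y)"
    using Cons.prems U by (auto simp: regn_def intro!: diffat)
  have "iter_pd (i # js) (\<lambda>z. f z - g z) y = pd i (\<lambda>z. iter_pd js f z - iter_pd js g z) y"
    using pd_local[OF U Cons.IH[OF r] Cons.prems(4)] Cons.prems by simp
  also have "\<dots> = iter_pd (i # js) f y - iter_pd (i # js) g y"
    using pd_diff[OF d] by simp
  finally show ?case .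
qed

lemma regular_add:
  assumes "open U" "regular_on U f" "regular_on U g"
  shows "regular_on U (\<lambda>z. f z + g z)"
  unfolding regular_on_def
proof (intro allI impI)
  fix js :: "nat list" assume js: "set js \<subseteq> {0,1,2}"
  have "(\<lambda>z. iter_pd js f z + iter_pd js g z) differentiable_on U"
    using assms js by (auto simp: regular_on_def)
  then show "iter_pd js (\<lambda>z. f z + g z) differentiable_on U"
    by (rule diff_on_cong[OF assms(1), rotated])
       (use iter_add[OF assms(1) regular_regn regular_regn js] assms in auto)
qed

lemma regular_diff:
  assumes "open U" "regular_on U f" "regular_on U g"
  shows "regular_on U (\<lambda>z. f z - g z)"
  unfolding regular_on_def
proof (intro allI impI)
  fix js :: "nat list" assume js: "set js \<subseteq> {0,1,2}"
  have "(\<lambda>z. iter_pd js f z - iter_pd js g z) differentiable_on U"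
    using assms js by (auto simp: regular_on_def)
  then show "iter_pd js (\<lambda>z. f z - g z) differentiable_on U"
    by (rule diff_on_cong[OF assms(1), rotated])
       (use iter_diff[OF assms(1) regular_regn regular_regn js] assms in auto)
qed

lemma pd_const_fun: "pd i (\<lambda>z. c) = (\<lambda>y. 0)"
  by (simp add: fun_eq_iff pd_const)

lemma iter_zero: "iter_pd js (\<lambda>z. 0) = (\<lambda>z. 0)"
  by (induction js) (simp_all add: pd_const_fun)

lemma regular_zero: "regular_on U (\<lambda>z. 0)"
  by (simp add: regular_on_def iter_zero)

lemma regular_pd: "regular_on U f \<Longrightarrow> i \<in> {0,1,2} \<Longrightarrow> regular_on U (pd i f)"
  unfolding regular_on_def
proof (intro allI impI)
  fix js :: "nat list"
  assume "\<forall>js. set js \<subseteq> {0, 1, 2} \<longrightarrow> iter_pd js f differentiable_on U" "i \<in> {0,1,2}" "set js \<subseteq> {0,1,2}"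
  then have "iter_pd (js @ [i]) f differentiable_on U" by auto
  then show "iter_pd js (pd i f) differentiable_on U" by (simp add: iter_pd_append)
qed

lemma regular_diffat: "regular_on U f \<Longrightarrow> open U \<Longrightarrow> y \<in> U \<Longrightarrow> f differentiable (at y)"
  using diffat[of U f y] by (auto simp: regular_on_def dest: spec[of _ "[]"])

lemma regular_coord_mult:
  assumes U: "open U" and a: "a \<in> {0,1,2}" and g: "regular_on U g"
  shows "regular_on U (\<lambda>z. coord a z * g z)"
proof -
  have "\<forall>g. regular_on U g \<longrightarrow> regn U n (\<lambda>z. coord a z * g z)" for n
  proof (induction n)
    case 0 then show ?case by (simp add: regn_def)
  next
    case (Suc n)
    show ?case
    proof (intro allI impI)
      fix g assume g: "regular_on U g"
      show "regn U (Suc n) (\<lambda>z. coord a z * g z)"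
        unfolding regn_def
      proof (intro allI impI)
        fix js :: "nat list" assume js: "set js \<subseteq> {0,1,2} \<and> length js < Suc n"
        show "iter_pd js (\<lambda>z. coord a z * g z) differentiable_on U"
        proof (cases js rule: rev_exhaust)
          case Nil
          have "g differentiable_on U" using g by (auto simp: regular_on_def dest: spec[of _ "[]"])
          then show ?thesis using Nil coord_diff_on by simp
        next
          case (snoc xs i)
          have i: "i \<in> {0,1,2}" and xs: "set xs \<subseteq> {0,1,2}" "length xs < n" using js snoc by auto
          define G where "G = (if i = a then g else (\<lambda>z. 0))"
          have rG: "regular_on U G" using g regular_zero by (simp add: G_def)
          have rpg: "regular_on U (pd i g)" using regular_pd[OF g i] .
          have IH: "regn U n (\<lambda>z. coord a z * pd i g z)" using Suc.IH rpg by blast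
          have eq1: "pd i (\<lambda>z. coord a z * g z) z = G z + coord a z * pd i g z" if "z \<in> U" for z
            using pd_coord_mult[OF regular_diffat[OF g U that] a i] by (auto simp: G_def)
          have eq2: "iter_pd js (\<lambda>z. coord a z * g z) z
              = iter_pd xs G z + iter_pd xs (\<lambda>z. coord a z * pd i g z) z" if "z \<in> U" for z
          proof -
            have "iter_pd js (\<lambda>z. coord a z * g z) z = iter_pd xs (\<lambda>z. G z + coord a z * pd i g z) z"
              using iter_local[OF U eq1 that, where js=xs] snoc by (simp add: iter_pd_append)
            also have "\<dots> = iter_pd xs G z + iter_pd xs (\<lambda>z. coord a z * pd i g z) z"
              by (rule iter_add[OF U regular_regn[OF rG] regn_mono[OF IH] xs(1) that]) (use xs in auto)
            finally show ?thesis .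
          qed
          have "(\<lambda>z. iter_pd xs G z + iter_pd xs (\<lambda>z. coord a z * pd i g z) z) differentiable_on U"
          proof (rule differentiable_on_add)
            show "iter_pd xs G differentiable_on U" using rG xs unfolding regular_on_def by blast
            show "iter_pd xs (\<lambda>z. coord a z * pd i g z) differentiable_on U"
              using IH xs unfolding regn_def by blast
          qed
          then show ?thesis by (rule diff_on_cong[OF U, rotated]) (simp add: eq2)
        qed
      qed
    qed
  qed
  then show ?thesis using g by (auto intro: regn_regular)
qed


lemma applyZ_Nil[simp]: "applyZ [] f = f" and applyZ_Cons[simp]: "applyZ (z # zs) f = apply_vf z (applyZ zs f)"
  by (simp_all add: applyZ_def)

lemma applyZ_append: "applyZ (xs @ ys) f = applyZ xs (applyZ ys f)"
  by (simp add: applyZ_def)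

lemma valid_vf_cases: "z \<in> valid_vf \<Longrightarrow> (\<And>i. z = D i \<Longrightarrow> i \<in> {0,1,2} \<Longrightarrow> P) \<Longrightarrow> (\<And>a. z = L a \<Longrightarrow> a \<in> {1,2} \<Longrightarrow> P) \<Longrightarrow> P"
  unfolding valid_vf_def by blast

lemma regular_L:
  assumes U: "open U" and f: "regular_on U f" and a: "a \<in> {1,2}"
  shows "regular_on U (apply_vf (L a) f)"
proof -
  have a': "a \<in> {0,1,2}" using a by auto
  show ?thesis
    using regular_add[OF U regular_coord_mult[OF U a' regular_pd[OF f, of 0]]
        regular_coord_mult[OF U _ regular_pd[OF f a']]] by simp
qed

lemma regular_vf:
  assumes "open U" "regular_on U f" "z \<in> valid_vf" shows "regular_on U (apply_vf z f)"
proof (rule valid_vf_cases[OF assms(3)])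
  fix i assume "z = D i" "i \<in> {0,1,2}"
  then show ?thesis using regular_pd[OF assms(2)] by simp
next
  fix a assume "z = L a" "a \<in> {1,2}"
  then show ?thesis using regular_L[OF assms(1,2)] by blast
qed

lemma regular_applyZ: "open U \<Longrightarrow> regular_on U f \<Longrightarrow> set zs \<subseteq> valid_vf \<Longrightarrow> regular_on U (applyZ zs f)"
  by (induction zs) (auto intro: regular_vf)

lemma vf_local:
  assumes U: "open U" and eq: "\<And>z. z \<in> U \<Longrightarrow> f z = g z" and y: "y \<in> U"
  shows "apply_vf z f y = apply_vf z g y"
  by (cases z) (simp_all add: pd_local[OF U eq y])

lemma applyZ_local:
  assumes U: "open U" and eq: "\<And>z. z \<in> U \<Longrightarrow> f z = g z" and y: "y \<in> U"
  shows "applyZ zs f y = applyZ zs g y"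
  using y
proof (induction zs arbitrary: y)
  case Nil then show ?case using eq by simp
next
  case (Cons z zs) then show ?case using vf_local[OF U Cons.IH] by simp
qed

lemma vf_add:
  assumes U: "open U" and f: "regular_on U f" and g: "regular_on U g" and y: "y \<in> U"
  shows "apply_vf z (\<lambda>w. f w + g w) y = apply_vf z f y + apply_vf z g y"
  using pd_add[OF regular_diffat[OF f U y] regular_diffat[OF g U y]]
  by (cases z) (simp_all add: algebra_simps)

lemma vf_diff:
  assumes U: "open U" and f: "regular_on U f" and g: "regular_on U g" and y: "y \<in> U"
  shows "apply_vf z (\<lambda>w. f w - g w) y = apply_vf z f y - apply_vf z g y"
  by (cases z) (simp_all add: pd_diff[OF regular_diffat[OF f U y] regular_diffat[OF g U y]] algebra_simps)

lemma vf_zero: "apply_vf z (\<lambda>w. 0) = (\<lambda>w. 0)"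
  by (cases z) (simp_all add: pd_const_fun)

lemma applyZ_zero: "applyZ zs (\<lambda>w. 0) = (\<lambda>w. 0)"
  by (induction zs) (simp_all add: vf_zero)

lemma applyZ_add:
  assumes U: "open U" and f: "regular_on U f" and g: "regular_on U g" and zs: "set zs \<subseteq> valid_vf"
  shows "y \<in> U \<Longrightarrow> applyZ zs (\<lambda>w. f w + g w) y = applyZ zs f y + applyZ zs g y"
  using zs
proof (induction zs arbitrary: y)
  case Nil then show ?case by simp
next
  case (Cons z zs)
  have "applyZ (z # zs) (\<lambda>w. f w + g w) y = apply_vf z (\<lambda>w. applyZ zs f w + applyZ zs g w) y"
    using vf_local[OF U Cons.IH Cons.prems(1)] Cons.prems by simp
  also have "\<dots> = applyZ (z # zs) f y + applyZ (z # zs) g y"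
    using vf_add[OF U regular_applyZ[OF U f] regular_applyZ[OF U g] Cons.prems(1)] Cons.prems by simp
  finally show ?case .
qed

lemma applyZ_diff:
  assumes U: "open U" and f: "regular_on U f" and g: "regular_on U g" and zs: "set zs \<subseteq> valid_vf"
  shows "y \<in> U \<Longrightarrow> applyZ zs (\<lambda>w. f w - g w) y = applyZ zs f y - applyZ zs g y"
  using zs
proof (induction zs arbitrary: y)
  case Nil then show ?case by simp
next
  case (Cons z zs)
  have "applyZ (z # zs) (\<lambda>w. f w - g w) y = apply_vf z (\<lambda>w. applyZ zs f w - applyZ zs g w) y"
    using vf_local[OF U Cons.IH Cons.prems(1)] Cons.prems by simp
  also have "\<dots> = applyZ (z # zs) f y - applyZ (z # zs) g y"
    using vf_diff[OF U regular_applyZ[OF U f] regular_applyZ[OF U g] Cons.prems(1)] Cons.prems by simp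
  finally show ?case .
qed

lemma sym_U:
  assumes U: "open U" and f: "regular_on U f" and y: "y \<in> U" and ij: "i \<in> {0,1,2}" "j \<in> {0,1,2}"
  shows "pd i (pd j f) y = pd j (pd i f) y"
proof -
  have "f differentiable_on U" using f by (auto simp: regular_on_def dest: spec[of _ "[]"])
  then show ?thesis
    using schwarz[OF U y _ regular_diffat[OF regular_pd[OF f ij(2)] U y] regular_diffat[OF regular_pd[OF f ij(1)] U y]]
    by simp
qed

definition Ecomm :: "nat \<Rightarrow> nat \<Rightarrow> (pt \<Rightarrow> real) \<Rightarrow> pt \<Rightarrow> real" where
  "Ecomm a c F = (if c = a then pd 0 F else if c = 0 then pd a F else (\<lambda>w. 0))"

lemma regular_Ecomm: "open U \<Longrightarrow> regular_on U F \<Longrightarrow> a \<in> {1,2} \<Longrightarrow> regular_on U (Ecomm a c F)"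
  by (auto simp: Ecomm_def intro: regular_pd regular_zero)

lemma comm_L:
  assumes U: "open U" and F: "regular_on U F" and a: "a \<in> {1,2}" and c: "c \<in> {0,1,2}" and y: "y \<in> U"
  shows "pd c (apply_vf (L a) F) y = apply_vf (L a) (pd c F) y + Ecomm a c F y"
proof -
  have a': "a \<in> {0,1,2}" using a by auto
  have z0: "(0::nat) \<in> {0,1,2}" by simp
  have r1: "regular_on U (\<lambda>w. coord a w * pd 0 F w)" by (rule regular_coord_mult[OF U a' regular_pd[OF F z0]])
  have r2: "regular_on U (\<lambda>w. coord 0 w * pd a F w)" by (rule regular_coord_mult[OF U z0 regular_pd[OF F a']])
  have "pd c (apply_vf (L a) F) y = pd c (\<lambda>w. coord a w * pd 0 F w) y + pd c (\<lambda>w. coord 0 w * pd a F w) y"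
    using pd_add[OF regular_diffat[OF r1 U y] regular_diffat[OF r2 U y]] by simp
  also have "\<dots> = ((if c = a then pd 0 F y else 0) + coord a y * pd c (pd 0 F) y)
      + ((if c = 0 then pd a F y else 0) + coord 0 y * pd c (pd a F) y)"
    using pd_coord_mult[OF regular_diffat[OF regular_pd[OF F z0] U y] a' c]
      pd_coord_mult[OF regular_diffat[OF regular_pd[OF F a'] U y] z0 c] by simp
  also have "\<dots> = apply_vf (L a) (pd c F) y + Ecomm a c F y"
    using sym_U[OF U F y c z0] sym_U[OF U F y c a'] a by (auto simp: Ecomm_def)
  finally show ?thesis .
qed

lemma triple:
  assumes U: "open U" and f: "regular_on U f" and y: "y \<in> U" and ij: "i \<in> {0,1,2}" "j \<in> {0,1,2}"
  shows "pd i (pd j (pd j f)) y = pd j (pd j (pd i f)) y"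
proof -
  have "pd i (pd j (pd j f)) y = pd j (pd i (pd j f)) y" by (rule sym_U[OF U regular_pd[OF f ij(2)] y ij])
  also have "\<dots> = pd j (pd j (pd i f)) y"
    by (rule pd_local[OF U _ y]) (rule sym_U[OF U f _ ij])
  finally show ?thesis .
qed

lemma wave_eq: "wave f = (\<lambda>y. pd 0 (pd 0 f) y - pd 1 (pd 1 f) y - pd 2 (pd 2 f) y)"
  by (simp add: wave_def fun_eq_iff)

lemma regular_wave: "open U \<Longrightarrow> regular_on U f \<Longrightarrow> regular_on U (wave f)"
  unfolding wave_eq by (intro regular_diff regular_pd) auto

lemma wave_local:
  assumes U: "open U" and eq: "\<And>z. z \<in> U \<Longrightarrow> f z = g z" and y: "y \<in> U"
  shows "wave f y = wave g y"
proof -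
  have "pd i (pd i f) y = pd i (pd i g) y" for i
    by (rule pd_local[OF U _ y]) (rule pd_local[OF U eq])
  then show ?thesis by (simp add: wave_def)
qed

lemma wave_D:
  assumes U: "open U" and f: "regular_on U f" and y: "y \<in> U" and i: "i \<in> {0,1,2}"
  shows "wave (pd i f) y = pd i (wave f) y"
proof -
  have z: "(0::nat) \<in> {0,1,2}" "(1::nat) \<in> {0,1,2}" "(2::nat) \<in> {0,1,2}" by auto
  have r: "regular_on U (pd j (pd j f))" if "j \<in> {0,1,2}" for j using regular_pd[OF regular_pd[OF f that] that] .
  have "pd i (wave f) y = pd i (\<lambda>w. pd 0 (pd 0 f) w - pd 1 (pd 1 f) w) y - pd i (pd 2 (pd 2 f)) y"
  proof -
    have r12: "regular_on U (\<lambda>w. pd 0 (pd 0 f) w - pd 1 (pd 1 f) w)" by (rule regular_diff[OF U r r]) auto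
    show ?thesis unfolding wave_eq by (rule pd_diff[OF regular_diffat[OF r12 U y] regular_diffat[OF r[OF z(3)] U y]])
  qed
  also have "\<dots> = pd i (pd 0 (pd 0 f)) y - pd i (pd 1 (pd 1 f)) y - pd i (pd 2 (pd 2 f)) y"
    using pd_diff[OF regular_diffat[OF r[OF z(1)] U y] regular_diffat[OF r[OF z(2)] U y]] by simp
  also have "\<dots> = wave (pd i f) y"
    using triple[OF U f y i z(1)] triple[OF U f y i z(2)] triple[OF U f y i z(3)] by (simp add: wave_def)
  finally show ?thesis by simp
qed

lemma pdpd_L:
  assumes U: "open U" and f: "regular_on U f" and a: "a \<in> {1,2}" and c: "c \<in> {0,1,2}" and y: "y \<in> U"
  shows "pd c (pd c (apply_vf (L a) f)) y = apply_vf (L a) (pd c (pd c f)) y + Ecomm a c (pd c f) y + pd c (Ecomm a c f) y"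
proof -
  have "pd c (pd c (apply_vf (L a) f)) y = pd c (\<lambda>w. apply_vf (L a) (pd c f) w + Ecomm a c f w) y"
    by (rule pd_local[OF U _ y]) (rule comm_L[OF U f a c])
  also have "\<dots> = pd c (apply_vf (L a) (pd c f)) y + pd c (Ecomm a c f) y"
  proof -
    have rA: "regular_on U (apply_vf (L a) (pd c f))" by (rule regular_L[OF U regular_pd[OF f c] a])
    have rE: "regular_on U (Ecomm a c f)" by (rule regular_Ecomm[OF U f a])
    show ?thesis by (rule pd_add[OF regular_diffat[OF rA U y] regular_diffat[OF rE U y]])
  qed
  also have "\<dots> = apply_vf (L a) (pd c (pd c f)) y + Ecomm a c (pd c f) y + pd c (Ecomm a c f) y"
    using comm_L[OF U regular_pd[OF f c] a c y] by simp
  finally show ?thesis .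
qed

lemma wave_L:
  assumes U: "open U" and f: "regular_on U f" and y: "y \<in> U" and a: "a \<in> {1,2}"
  shows "wave (apply_vf (L a) f) y = apply_vf (L a) (wave f) y"
proof -
  have z: "(0::nat) \<in> {0,1,2}" "(1::nat) \<in> {0,1,2}" "(2::nat) \<in> {0,1,2}" by auto
  have r: "regular_on U (pd j (pd j f))" if "j \<in> {0,1,2}" for j using regular_pd[OF regular_pd[OF f that] that] .
  have "apply_vf (L a) (wave f) y = apply_vf (L a) (\<lambda>w. pd 0 (pd 0 f) w - pd 1 (pd 1 f) w) y - apply_vf (L a) (pd 2 (pd 2 f)) y"
  proof -
    have r12: "regular_on U (\<lambda>w. pd 0 (pd 0 f) w - pd 1 (pd 1 f) w)" by (rule regular_diff[OF U r r]) auto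
    show ?thesis unfolding wave_eq by (rule vf_diff[OF U r12 r[OF z(3)] y])
  qed
  also have "\<dots> = apply_vf (L a) (pd 0 (pd 0 f)) y - apply_vf (L a) (pd 1 (pd 1 f)) y - apply_vf (L a) (pd 2 (pd 2 f)) y"
    using vf_diff[OF U r[OF z(1)] r[OF z(2)] y, of "L a"] by (simp only:)
  finally have 1: "apply_vf (L a) (wave f) y = \<dots>" .
  have "pd b (\<lambda>w. 0) y = 0" for b by (simp add: pd_const)
  then show ?thesis
    unfolding 1 wave_def pdpd_L[OF U f a z(1) y] pdpd_L[OF U f a z(2) y] pdpd_L[OF U f a z(3) y]
    using a by (auto simp: Ecomm_def)
qed

lemma wave_vf:
  assumes U: "open U" and f: "regular_on U f" and y: "y \<in> U" and z: "z \<in> valid_vf"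
  shows "wave (apply_vf z f) y = apply_vf z (wave f) y"
  using z by (rule valid_vf_cases) (use wave_D[OF U f y] wave_L[OF U f y] in auto)

lemma wave_applyZ:
  assumes U: "open U" and u: "regular_on U u" and zs: "set zs \<subseteq> valid_vf"
  shows "y \<in> U \<Longrightarrow> wave (applyZ zs u) y = applyZ zs (wave u) y"
  using zs
proof (induction zs arbitrary: y)
  case Nil then show ?case by simp
next
  case (Cons z zs)
  have "wave (applyZ (z # zs) u) y = apply_vf z (wave (applyZ zs u)) y"
    using wave_vf[OF U regular_applyZ[OF U u] Cons.prems(1)] Cons.prems by simp
  also have "\<dots> = applyZ (z # zs) (wave u) y"
    using vf_local[OF U Cons.IH Cons.prems(1)] Cons.prems by simp
  finally show ?case .
qed


lemma finite_valid: "finite valid_vf" by (simp add: valid_vf_def)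

lemma finite_adm: "finite (adm p k)"
  by (rule finite_subset[OF _ finite_lists_length_le[OF finite_valid, of p]]) (auto simp: adm_def)

lemma nil_adm: "[] \<in> adm p k" by (simp add: adm_def nboost_def)

lemma normpk_ge: "zs \<in> adm p k \<Longrightarrow> \<bar>applyZ zs w y\<bar> \<le> normpk p k w y"
  unfolding normpk_def by (rule Max_ge) (auto simp: finite_adm)

lemma normpk_nonneg: "0 \<le> normpk p k w y"
  using normpk_ge[OF nil_adm[of p k], of w y] by linarith

lemma adm_mono: "p \<le> p' \<Longrightarrow> k \<le> k' \<Longrightarrow> adm p k \<subseteq> adm p' k'"
  by (auto simp: adm_def)

lemma normpk_mono: "p \<le> p' \<Longrightarrow> k \<le> k' \<Longrightarrow> normpk p k w y \<le> normpk p' k' w y"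
  unfolding normpk_def
proof (rule Max_mono)
  assume "p \<le> p'" "k \<le> k'"
  then show "(\<lambda>zs. \<bar>applyZ zs w y\<bar>) ` adm p k \<subseteq> (\<lambda>zs. \<bar>applyZ zs w y\<bar>) ` adm p' k'"
    by (intro image_mono adm_mono)
  show "(\<lambda>zs. \<bar>applyZ zs w y\<bar>) ` adm p k \<noteq> {}" using nil_adm[of p k] by blast
  show "finite ((\<lambda>zs. \<bar>applyZ zs w y\<bar>) ` adm p' k')" by (rule finite_imageI[OF finite_adm])
qed

lemma normD_ge: "c \<in> {0,1,2} \<Longrightarrow> normpk p k (pd c u) y \<le> normD p k u y"
  unfolding normD_def by (rule Max_ge) auto

lemma normD_nonneg: "0 \<le> normD p k u y"
  using normD_ge[of 0 p k u y] normpk_nonneg[of p k "pd 0 u" y] by simp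

lemma normD_mono: "p \<le> p' \<Longrightarrow> k \<le> k' \<Longrightarrow> normD p k u y \<le> normD p' k' u y"
  unfolding normD_def[of p k]
  by (subst Max_le_iff) (auto intro: order_trans[OF normpk_mono normD_ge])

lemma nboost_Cons[simp]: "nboost (D i # zs) = nboost zs" "nboost (L a # zs) = Suc (nboost zs)"
  by (simp_all add: nboost_def is_boost_def)

lemma nboost_append[simp]: "nboost (xs @ ys) = nboost xs + nboost ys"
  by (simp add: nboost_def)

lemma nboost_single[simp]: "nboost [D i] = 0" "nboost [L a] = 1"
  by (simp_all add: nboost_def is_boost_def)

lemma nboost_Nil[simp]: "nboost [] = 0" by (simp add: nboost_def)

lemma boundG:
  assumes U: "open U" and u: "regular_on U u"
  shows "set pre \<subseteq> valid_vf \<Longrightarrow> set zs \<subseteq> valid_vf \<Longrightarrow> c \<in> {0,1,2} \<Longrightarrow> y \<in> U \<Longrightarrow>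
    \<bar>applyZ pre (pd c (applyZ zs u)) y\<bar> \<le> 2 ^ length zs * normD (length pre + length zs) (nboost pre + nboost zs) u y"
proof (induction zs arbitrary: pre c y)
  case Nil
  have "pre \<in> adm (length pre) (nboost pre)" using Nil by (simp add: adm_def)
  then show ?case using order_trans[OF normpk_ge[OF \<open>pre \<in> adm (length pre) (nboost pre)\<close>] normD_ge[OF Nil(3)]] by simp
next
  case (Cons z zs)
  define F where "F = applyZ zs u"
  have F: "regular_on U F" unfolding F_def using regular_applyZ[OF U u] Cons.prems by simp
  have zs: "set zs \<subseteq> valid_vf" and z: "z \<in> valid_vf" using Cons.prems by auto
  define N where "N = normD (length pre + length (z # zs)) (nboost pre + nboost (z # zs)) u y"
  have N0: "0 \<le> N" by (simp add: N_def normD_nonneg)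
  show ?case
  proof (rule valid_vf_cases[OF z])
    fix i assume zi: "z = D i" and i: "i \<in> {0,1,2}"
    have "applyZ pre (pd c (applyZ (z # zs) u)) y = applyZ pre (pd i (pd c F)) y"
      unfolding zi F_def applyZ_Cons apply_vf.simps
      by (rule applyZ_local[OF U _ Cons.prems(4)]) (rule sym_U[OF U regular_applyZ[OF U u zs] _ Cons.prems(3) i])
    also have "\<dots> = applyZ (pre @ [D i]) (pd c F) y" by (simp add: applyZ_append)
    finally have "\<bar>applyZ pre (pd c (applyZ (z # zs) u)) y\<bar> \<le> 2 ^ length zs * N"
      using Cons.IH[of "pre @ [D i]" c y] Cons.prems by (simp add: F_def N_def zi i)
    also have "\<dots> \<le> 2 ^ length (z # zs) * N" using N0 by (intro mult_right_mono) auto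
    finally show ?thesis by (simp add: N_def)
  next
    fix a assume za: "z = L a" and a: "a \<in> {1,2}"
    have a': "a \<in> {0,1,2}" using a by auto
    have rA: "regular_on U (apply_vf (L a) (pd c F))" by (rule regular_L[OF U regular_pd[OF F Cons.prems(3)] a])
    have rE: "regular_on U (Ecomm a c F)" by (rule regular_Ecomm[OF U F a])
    have "applyZ pre (pd c (applyZ (z # zs) u)) y = applyZ pre (\<lambda>w. apply_vf (L a) (pd c F) w + Ecomm a c F w) y"
      unfolding za F_def applyZ_Cons
      by (rule applyZ_local[OF U _ Cons.prems(4)]) (rule comm_L[OF U regular_applyZ[OF U u zs] a Cons.prems(3)])
    also have "\<dots> = applyZ (pre @ [L a]) (pd c F) y + applyZ pre (Ecomm a c F) y"
      using applyZ_add[OF U rA rE Cons.prems(1,4)] by (simp add: applyZ_append)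
    finally have eq: "applyZ pre (pd c (applyZ (z # zs) u)) y = applyZ (pre @ [L a]) (pd c F) y + applyZ pre (Ecomm a c F) y" .
    have b1: "\<bar>applyZ (pre @ [L a]) (pd c F) y\<bar> \<le> 2 ^ length zs * N"
      using Cons.IH[of "pre @ [L a]" c y] Cons.prems a by (simp add: F_def N_def za)
    have mono: "2 ^ length zs * normD (length pre + length zs) (nboost pre + nboost zs) u y \<le> 2 ^ length zs * N"
      unfolding N_def by (intro mult_left_mono normD_mono) (auto simp: za)
    have IHc: "\<bar>applyZ pre (pd c' F) y\<bar> \<le> 2 ^ length zs * N" if "c' \<in> {0,1,2}" for c'
      using order_trans[OF Cons.IH[OF Cons.prems(1) zs that Cons.prems(4)] mono] by (simp add: F_def)
    have b2: "\<bar>applyZ pre (Ecomm a c F) y\<bar> \<le> 2 ^ length zs * N"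
    proof (cases "c = a")
      case True
      then show ?thesis using IHc[of 0] by (simp add: Ecomm_def)
    next
      case False
      show ?thesis
      proof (cases "c = 0")
        case True
        then show ?thesis using IHc[OF a'] False by (simp add: Ecomm_def)
      next
        case False
        then show ?thesis using \<open>c \<noteq> a\<close> N0 by (simp add: Ecomm_def applyZ_zero)
      qed
    qed
    have "\<bar>applyZ pre (pd c (applyZ (z # zs) u)) y\<bar> \<le> 2 ^ length zs * N + 2 ^ length zs * N"
      unfolding eq using b1 b2 by linarith
    then show ?thesis by (simp add: N_def)
  qed
qed

lemma alg_helper:
  fixes t rho A B X x M K :: real
  assumes t: "t > 0" and r: "0 \<le> rho" "rho \<le> 1" and A: "\<bar>A\<bar> \<le> M" and B: "rho * \<bar>B\<bar> \<le> K"
    and x: "\<bar>x\<bar> \<le> t" and eq: "t * X = A - x * B"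
  shows "rho * \<bar>X\<bar> \<le> M / t + K"
proof -
  have "X = (A - x * B) / t" using eq t by (simp add: field_simps)
  then have "rho * \<bar>X\<bar> = (rho * \<bar>A - x * B\<bar>) / t" using t by (simp add: abs_divide)
  also have "rho * \<bar>A - x * B\<bar> \<le> rho * \<bar>A\<bar> + \<bar>x\<bar> * (rho * \<bar>B\<bar>)"
    using r by (metis abs_diff_le_iff abs_mult abs_triangle_ineq4 mult.left_commute distrib_left mult_left_mono)
  also have "rho * \<bar>A\<bar> \<le> M" using r A by (metis abs_ge_zero mult_le_cancel_right1 mult_left_le_one_le order_trans mult.commute)
  also have "\<bar>x\<bar> * (rho * \<bar>B\<bar>) \<le> t * K"
    using x B by (meson abs_ge_zero mult_mono order_trans r(1) zero_le_mult_iff)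
  finally show ?thesis using t by (simp add: divide_right_mono add_divide_distrib)
qed


lemma alg_main:
  fixes t x1 x2 rho M w00 w01 w02 w10 w11 w12 w20 w21 w22 :: real
  assumes t: "t > 0" and x: "\<bar>x1\<bar> \<le> t" "\<bar>x2\<bar> \<le> t"
    and rho: "rho = (t\<^sup>2 - x1\<^sup>2 - x2\<^sup>2) / t\<^sup>2" "0 \<le> rho"
    and P10: "\<bar>x1 * w00 + t * w10\<bar> \<le> M" and P11: "\<bar>x1 * w01 + t * w11\<bar> \<le> M" and P12: "\<bar>x1 * w02 + t * w12\<bar> \<le> M"
    and P20: "\<bar>x2 * w00 + t * w20\<bar> \<le> M" and P21: "\<bar>x2 * w01 + t * w21\<bar> \<le> M" and P22: "\<bar>x2 * w02 + t * w22\<bar> \<le> M"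
    and s1: "w01 = w10" and s2: "w02 = w20"
  shows "rho * \<bar>w00\<bar> \<le> \<bar>w00 - w11 - w22\<bar> + 6 * M / t \<and>
         rho * \<bar>w01\<bar> \<le> \<bar>w00 - w11 - w22\<bar> + 6 * M / t \<and>
         rho * \<bar>w02\<bar> \<le> \<bar>w00 - w11 - w22\<bar> + 6 * M / t \<and>
         rho * \<bar>w10\<bar> \<le> \<bar>w00 - w11 - w22\<bar> + 6 * M / t \<and>
         rho * \<bar>w20\<bar> \<le> \<bar>w00 - w11 - w22\<bar> + 6 * M / t \<and>
         rho * \<bar>w11\<bar> \<le> \<bar>w00 - w11 - w22\<bar> + 6 * M / t \<and>
         rho * \<bar>w12\<bar> \<le> \<bar>w00 - w11 - w22\<bar> + 6 * M / t \<and>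
         rho * \<bar>w21\<bar> \<le> \<bar>w00 - w11 - w22\<bar> + 6 * M / t \<and>
         rho * \<bar>w22\<bar> \<le> \<bar>w00 - w11 - w22\<bar> + 6 * M / t"
proof -
  define W where "W = w00 - w11 - w22"
  define p10 where "p10 = x1 * w00 + t * w10"
  define p11 where "p11 = x1 * w01 + t * w11"
  define p20 where "p20 = x2 * w00 + t * w20"
  define p22 where "p22 = x2 * w02 + t * w22"
  have M0: "0 \<le> M" using P10 by linarith
  have r1: "rho \<le> 1"
  proof -
    have "rho * t\<^sup>2 = t\<^sup>2 - x1\<^sup>2 - x2\<^sup>2" using rho t by (simp add: field_simps)
    also have "\<dots> \<le> 1 * t\<^sup>2" by (simp add: add_nonneg_nonneg)
    finally show ?thesis using t by (meson mult_right_le_imp_le zero_less_power)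
  qed
  have eq0: "rho * w00 = W + (p11 + p22) / t - (x1 * p10 + x2 * p20) / t\<^sup>2"
    using t unfolding rho W_def p10_def p11_def p20_def p22_def s1 s2
    by (simp add: field_simps power2_eq_square)
  have q1: "\<bar>x1 * p10\<bar> / t\<^sup>2 \<le> M / t"
  proof -
    have "\<bar>x1 * p10\<bar> \<le> t * M" unfolding abs_mult using x P10 M0 unfolding p10_def
      by (intro mult_mono) auto
    then show ?thesis using t by (simp add: field_simps power2_eq_square)
  qed
  have q2: "\<bar>x2 * p20\<bar> / t\<^sup>2 \<le> M / t"
  proof -
    have "\<bar>x2 * p20\<bar> \<le> t * M" unfolding abs_mult using x P20 M0 unfolding p20_def
      by (intro mult_mono) auto
    then show ?thesis using t by (simp add: field_simps power2_eq_square)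
  qed
  have q3: "\<bar>p11 + p22\<bar> / t \<le> 2 * M / t"
    using P11 P22 t unfolding p11_def p22_def by (intro divide_right_mono) (auto simp: abs_le_iff)
  have b00: "rho * \<bar>w00\<bar> \<le> \<bar>W\<bar> + 4 * M / t"
  proof -
    have "rho * \<bar>w00\<bar> = \<bar>rho * w00\<bar>" using rho(2) by (simp add: abs_mult)
    also have "\<dots> \<le> \<bar>W\<bar> + \<bar>p11 + p22\<bar> / t + \<bar>x1 * p10\<bar> / t\<^sup>2 + \<bar>x2 * p20\<bar> / t\<^sup>2"
    proof -
      define A1 where "A1 = (p11 + p22) / t"
      define A2 where "A2 = x1 * p10 / t\<^sup>2"
      define A3 where "A3 = x2 * p20 / t\<^sup>2"
      have e: "\<bar>A1\<bar> = \<bar>p11 + p22\<bar> / t" "\<bar>A2\<bar> = \<bar>x1 * p10\<bar> / t\<^sup>2" "\<bar>A3\<bar> = \<bar>x2 * p20\<bar> / t\<^sup>2"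
        using t by (simp_all add: A1_def A2_def A3_def abs_divide)
      have "\<bar>W + A1 - (A2 + A3)\<bar> \<le> \<bar>W\<bar> + \<bar>A1\<bar> + \<bar>A2\<bar> + \<bar>A3\<bar>"
        using abs_ge_self[of W] abs_ge_minus_self[of W] abs_ge_self[of A1] abs_ge_minus_self[of A1]
          abs_ge_self[of A2] abs_ge_minus_self[of A2] abs_ge_self[of A3] abs_ge_minus_self[of A3]
        by (simp add: abs_le_iff)
      then show ?thesis unfolding eq0 e[symmetric] A1_def A2_def A3_def by (simp add: add_divide_distrib)
    qed
    also have "\<dots> \<le> \<bar>W\<bar> + 2 * M / t + M / t + M / t" using q1 q2 q3 by linarith
    finally show ?thesis by (simp add: field_simps)
  qed
  have b10: "rho * \<bar>w10\<bar> \<le> M / t + (\<bar>W\<bar> + 4 * M / t)"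
    by (rule alg_helper[OF t rho(2) r1 P10 b00 x(1)]) (simp add: algebra_simps)
  have b20: "rho * \<bar>w20\<bar> \<le> M / t + (\<bar>W\<bar> + 4 * M / t)"
    by (rule alg_helper[OF t rho(2) r1 P20 b00 x(2)]) (simp add: algebra_simps)
  have b10': "rho * \<bar>w10\<bar> \<le> \<bar>W\<bar> + 5 * M / t" using b10 by (simp add: field_simps)
  have b20': "rho * \<bar>w20\<bar> \<le> \<bar>W\<bar> + 5 * M / t" using b20 by (simp add: field_simps)
  have b01: "rho * \<bar>w01\<bar> \<le> \<bar>W\<bar> + 5 * M / t" using b10' s1 by simp
  have b02: "rho * \<bar>w02\<bar> \<le> \<bar>W\<bar> + 5 * M / t" using b20' s2 by simp
  have b11: "rho * \<bar>w11\<bar> \<le> M / t + (\<bar>W\<bar> + 5 * M / t)"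
    by (rule alg_helper[OF t rho(2) r1 P11 b01 x(1)]) (simp add: algebra_simps)
  have b12: "rho * \<bar>w12\<bar> \<le> M / t + (\<bar>W\<bar> + 5 * M / t)"
    by (rule alg_helper[OF t rho(2) r1 P12 b02 x(1)]) (simp add: algebra_simps)
  have b21: "rho * \<bar>w21\<bar> \<le> M / t + (\<bar>W\<bar> + 5 * M / t)"
    by (rule alg_helper[OF t rho(2) r1 P21 b01 x(2)]) (simp add: algebra_simps)
  have b22: "rho * \<bar>w22\<bar> \<le> M / t + (\<bar>W\<bar> + 5 * M / t)"
    by (rule alg_helper[OF t rho(2) r1 P22 b02 x(2)]) (simp add: algebra_simps)
  have m: "M / t + (\<bar>W\<bar> + 5 * M / t) = \<bar>W\<bar> + 6 * M / t" "\<bar>W\<bar> + 5 * M / t \<le> \<bar>W\<bar> + 6 * M / t"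
    "\<bar>W\<bar> + 4 * M / t \<le> \<bar>W\<bar> + 6 * M / t"
    using M0 t by (auto simp: field_simps)
  have c00: "rho * \<bar>w00\<bar> \<le> \<bar>W\<bar> + 6 * M / t" using b00 m(3) by (rule order_trans)
  have c01: "rho * \<bar>w01\<bar> \<le> \<bar>W\<bar> + 6 * M / t" using b01 m(2) by (rule order_trans)
  have c02: "rho * \<bar>w02\<bar> \<le> \<bar>W\<bar> + 6 * M / t" using b02 m(2) by (rule order_trans)
  have c10: "rho * \<bar>w10\<bar> \<le> \<bar>W\<bar> + 6 * M / t" using b10' m(2) by (rule order_trans)
  have c20: "rho * \<bar>w20\<bar> \<le> \<bar>W\<bar> + 6 * M / t" using b20' m(2) by (rule order_trans)
  have c11: "rho * \<bar>w11\<bar> \<le> \<bar>W\<bar> + 6 * M / t" using b11 unfolding m(1) .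
  have c12: "rho * \<bar>w12\<bar> \<le> \<bar>W\<bar> + 6 * M / t" using b12 unfolding m(1) .
  have c21: "rho * \<bar>w21\<bar> \<le> \<bar>W\<bar> + 6 * M / t" using b21 unfolding m(1) .
  have c22: "rho * \<bar>w22\<bar> \<le> \<bar>W\<bar> + 6 * M / t" using b22 unfolding m(1) .
  show ?thesis unfolding W_def[symmetric]
    using c00 c01 c02 c10 c20 c11 c12 c21 c22 by blast
qed


definition Phi :: "(pt \<Rightarrow> real) \<Rightarrow> pt \<Rightarrow> real \<Rightarrow> nat \<Rightarrow> nat \<Rightarrow> real" where
  "Phi u y t q j = 6 * 2 ^ q * (normpk q j (wave u) y + normD (Suc q) (Suc j) u y / t)"

lemma Kset_facts:
  assumes "(t, x1, x2) \<in> Kset s0 s1"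
  shows "t > 0" "\<bar>x1\<bar> \<le> t" "\<bar>x2\<bar> \<le> t" "0 \<le> t\<^sup>2 - x1\<^sup>2 - x2\<^sup>2"
    "(sqrt (t\<^sup>2 - x1\<^sup>2 - x2\<^sup>2) / t)\<^sup>2 = (t\<^sup>2 - x1\<^sup>2 - x2\<^sup>2) / t\<^sup>2"
proof -
  have h: "t > sqrt (x1\<^sup>2 + x2\<^sup>2) + 1" using assms by (simp add: Kset_def)
  have s0: "0 \<le> sqrt (x1\<^sup>2 + x2\<^sup>2)" by simp
  show t: "t > 0" using h s0 by linarith
  have "sqrt (x1\<^sup>2 + x2\<^sup>2) \<le> t" using h by linarith
  then have lt: "x1\<^sup>2 + x2\<^sup>2 \<le> t\<^sup>2" using t
    by (metis add_nonneg_nonneg real_le_rsqrt real_sqrt_le_iff sqrt_le_D zero_le_power2)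
  show "0 \<le> t\<^sup>2 - x1\<^sup>2 - x2\<^sup>2" using lt by simp
  have "x1\<^sup>2 \<le> t\<^sup>2" using lt zero_le_power2[of x2] by linarith
  then show "\<bar>x1\<bar> \<le> t" using t power2_le_imp_le[of "\<bar>x1\<bar>" t] by simp
  have "x2\<^sup>2 \<le> t\<^sup>2" using lt zero_le_power2[of x1] by linarith
  then show "\<bar>x2\<bar> \<le> t" using t power2_le_imp_le[of "\<bar>x2\<bar>" t] by simp
  show "(sqrt (t\<^sup>2 - x1\<^sup>2 - x2\<^sup>2) / t)\<^sup>2 = (t\<^sup>2 - x1\<^sup>2 - x2\<^sup>2) / t\<^sup>2"
    using lt by (simp add: power_divide)
qed

lemma coord_pt: "coord 0 (t, x1, x2) = t" "coord 1 (t, x1, x2) = x1" "coord 2 (t, x1, x2) = x2"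
  by (simp_all add: coord_def)

lemma core:
  assumes U: "open U" and KU: "Kset s0 s1 \<subseteq> U" and u: "regular_on U u" and zs: "set zs \<subseteq> valid_vf"
    and yK: "(t, x1, x2) \<in> Kset s0 s1" and al: "\<alpha> \<in> {0,1,2}" and be: "\<beta> \<in> {0,1,2}"
  shows "(sqrt (t\<^sup>2 - x1\<^sup>2 - x2\<^sup>2) / t)\<^sup>2 * \<bar>pd \<alpha> (pd \<beta> (applyZ zs u)) (t, x1, x2)\<bar>
     \<le> Phi u (t, x1, x2) t (length zs) (nboost zs)"
proof -
  define y where "y = (t, x1, x2)"
  have y: "y \<in> U" using yK KU by (auto simp: y_def)
  define F where "F = applyZ zs u"
  have F: "regular_on U F" unfolding F_def by (rule regular_applyZ[OF U u zs])
  define n where "n = length zs"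
  define b where "b = nboost zs"
  define M where "M = 2 ^ n * normD (Suc n) (Suc b) u y"
  define rho where "rho = (sqrt (t\<^sup>2 - x1\<^sup>2 - x2\<^sup>2) / t)\<^sup>2"
  note kf = Kset_facts[OF yK]
  have rho: "rho = (t\<^sup>2 - x1\<^sup>2 - x2\<^sup>2) / t\<^sup>2" "0 \<le> rho" using kf by (simp_all add: rho_def)
  have P: "\<bar>coord a y * pd 0 (pd c F) y + t * pd a (pd c F) y\<bar> \<le> M" if a: "a \<in> {1,2}" and c: "c \<in> {0,1,2}" for a c
  proof -
    have "set [L a] \<subseteq> valid_vf" using a by (auto simp: valid_vf_def)
    from boundG[OF U u this zs c y] show ?thesis
      by (simp add: F_def M_def n_def b_def y_def coord_pt)
  qed
  have z: "(0::nat) \<in> {0,1,2}" "(1::nat) \<in> {0,1,2}" "(2::nat) \<in> {0,1,2}" "(1::nat) \<in> {1,2}" "(2::nat) \<in> {1,2}" by auto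
  have cy: "coord 1 y = x1" "coord 2 y = x2" by (simp_all add: y_def coord_def)
  have W: "\<bar>pd 0 (pd 0 F) y - pd 1 (pd 1 F) y - pd 2 (pd 2 F) y\<bar> \<le> normpk n b (wave u) y"
  proof -
    have "pd 0 (pd 0 F) y - pd 1 (pd 1 F) y - pd 2 (pd 2 F) y = applyZ zs (wave u) y"
      using wave_applyZ[OF U u zs y] by (simp add: wave_def F_def)
    moreover have "zs \<in> adm n b" using zs by (simp add: adm_def n_def b_def)
    ultimately show ?thesis using normpk_ge by metis
  qed
  have A: "rho * \<bar>pd a (pd c F) y\<bar> \<le> \<bar>pd 0 (pd 0 F) y - pd 1 (pd 1 F) y - pd 2 (pd 2 F) y\<bar> + 6 * M / t"
    if "a \<in> {0,1,2}" "c \<in> {0,1,2}" for a c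
    using alg_main[OF kf(1) kf(2) kf(3) rho P[OF z(4) z(1), unfolded cy] P[OF z(4) z(2), unfolded cy]
        P[OF z(4) z(3), unfolded cy] P[OF z(5) z(1), unfolded cy] P[OF z(5) z(2), unfolded cy]
        P[OF z(5) z(3), unfolded cy] sym_U[OF U F y z(1) z(2)] sym_U[OF U F y z(1) z(3)]] that
    by auto
  have "rho * \<bar>pd \<alpha> (pd \<beta> F) y\<bar> \<le> normpk n b (wave u) y + 6 * M / t"
    using A[OF al be] W by linarith
  also have "\<dots> \<le> Phi u y t n b"
  proof -
    have "normpk n b (wave u) y \<le> 6 * 2 ^ n * normpk n b (wave u) y"
    proof -
      have "1 \<le> 6 * (2::real) ^ n" using one_le_power[of "2::real" n] by linarith
      then show ?thesis using normpk_nonneg[of n b "wave u" y] mult_right_mono[of 1 "6 * (2::real) ^ n"] by simp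
    qed
    then show ?thesis by (simp add: Phi_def M_def distrib_left)
  qed
  finally show ?thesis by (simp add: rho_def F_def y_def n_def b_def)
qed


lemma Phi_nonneg: "t > 0 \<Longrightarrow> 0 \<le> Phi u y t q j"
  unfolding Phi_def using normpk_nonneg[of q j "wave u" y] normD_nonneg[of "Suc q" "Suc j" u y]
  by (intro mult_nonneg_nonneg add_nonneg_nonneg divide_nonneg_pos) auto

lemma Phi_mono:
  assumes t: "t > 0" and qq: "q \<le> q'" and jj: "j \<le> j'"
  shows "Phi u y t q j \<le> Phi u y t q' j'"
proof -
  have a: "6 * 2 ^ q \<le> 6 * (2::real) ^ q'" using qq by (simp add: power_increasing)
  have b: "normpk q j (wave u) y + normD (Suc q) (Suc j) u y / t \<le> normpk q' j' (wave u) y + normD (Suc q') (Suc j') u y / t"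
    using qq jj t by (intro add_mono divide_right_mono normpk_mono normD_mono) auto
  have c: "0 \<le> normpk q j (wave u) y + normD (Suc q) (Suc j) u y / t"
    using normpk_nonneg[of q j "wave u" y] normD_nonneg[of "Suc q" "Suc j" u y] t by simp
  show ?thesis unfolding Phi_def by (rule mult_mono[OF a b _ c]) simp
qed

lemma part2:
  assumes U: "open U" and KU: "Kset s0 s1 \<subseteq> U" and u: "regular_on U u"
    and yK: "(t, x1, x2) \<in> Kset s0 s1"
  shows "set pre \<subseteq> valid_vf \<Longrightarrow> set zs \<subseteq> valid_vf \<Longrightarrow> c \<in> {0,1,2} \<Longrightarrow> d \<in> {0,1,2} \<Longrightarrow>
    (sqrt (t\<^sup>2 - x1\<^sup>2 - x2\<^sup>2) / t)\<^sup>2 * \<bar>applyZ pre (pd c (pd d (applyZ zs u))) (t, x1, x2)\<bar>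
      \<le> 3 ^ length pre * Phi u (t, x1, x2) t (length pre + length zs) (nboost pre + nboost zs)"
proof (induction pre arbitrary: zs c d rule: rev_induct)
  case Nil
  then show ?case using core[OF U KU u Nil(2) yK Nil(3) Nil(4)] by simp
next
  case (snoc z pre)
  define y where "y = (t, x1, x2)"
  have y: "y \<in> U" using yK KU by (auto simp: y_def)
  define rho where "rho = (sqrt (t\<^sup>2 - x1\<^sup>2 - x2\<^sup>2) / t)\<^sup>2"
  have rho0: "0 \<le> rho" by (simp add: rho_def)
  note kf = Kset_facts[OF yK]
  define F where "F = applyZ zs u"
  have F: "regular_on U F" unfolding F_def by (rule regular_applyZ[OF U u snoc.prems(2)])
  have pre: "set pre \<subseteq> valid_vf" and z: "z \<in> valid_vf" using snoc.prems by auto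
  define m where "m = length pre"
  define T where "T = Phi u y t (length (pre @ [z]) + length zs) (nboost (pre @ [z]) + nboost zs)"
  have T0: "0 \<le> T" unfolding T_def by (rule Phi_nonneg[OF kf(1)])
  have IHm: "rho * \<bar>applyZ pre (pd c' (pd d' F)) y\<bar> \<le> 3 ^ m * T" if "c' \<in> {0,1,2}" "d' \<in> {0,1,2}" for c' d'
  proof -
    have "rho * \<bar>applyZ pre (pd c' (pd d' F)) y\<bar> \<le> 3 ^ m * Phi u y t (length pre + length zs) (nboost pre + nboost zs)"
      using snoc.IH[OF pre snoc.prems(2) that] by (simp add: rho_def y_def F_def m_def)
    also have "\<dots> \<le> 3 ^ m * T" unfolding T_def
      by (intro mult_left_mono Phi_mono[OF kf(1)]) auto
    finally show ?thesis .
  qed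
  have c: "c \<in> {0,1,2}" and d: "d \<in> {0,1,2}" using snoc.prems by auto
  have "rho * \<bar>applyZ (pre @ [z]) (pd c (pd d F)) y\<bar> \<le> 3 ^ (Suc m) * T"
  proof (rule valid_vf_cases[OF z])
    fix i assume zi: "z = D i" and i: "i \<in> {0,1,2}"
    have "applyZ (pre @ [z]) (pd c (pd d F)) y = applyZ pre (pd c (pd d (pd i F))) y"
      unfolding zi applyZ_append
    proof (simp, rule applyZ_local[OF U _ y])
      fix w assume w: "w \<in> U"
      have "pd i (pd c (pd d F)) w = pd c (pd i (pd d F)) w" by (rule sym_U[OF U regular_pd[OF F d] w i c])
      also have "\<dots> = pd c (pd d (pd i F)) w" by (rule pd_local[OF U _ w]) (rule sym_U[OF U F _ i d])
      finally show "pd i (pd c (pd d F)) w = pd c (pd d (pd i F)) w" .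
    qed
    moreover have "rho * \<bar>applyZ pre (pd c (pd d (pd i F))) y\<bar> \<le> 3 ^ m * T"
    proof -
      have "set (D i # zs) \<subseteq> valid_vf" using snoc.prems i by (auto simp: valid_vf_def)
      from snoc.IH[OF pre this c d] show ?thesis
        by (simp add: rho_def y_def F_def m_def T_def zi)
    qed
    moreover have "3 ^ m * T \<le> 3 ^ Suc m * T" using T0 by (intro mult_right_mono) auto
    ultimately show ?thesis by (metis order_trans)
  next
    fix a assume za: "z = L a" and a: "a \<in> {1,2}"
    have a': "a \<in> {0,1,2}" using a by auto
    define T1 where "T1 = pd c (pd d (apply_vf (L a) F))"
    define T2 where "T2 = pd c (Ecomm a d F)"
    define T3 where "T3 = Ecomm a c (pd d F)"
    have rT1: "regular_on U T1" unfolding T1_def by (intro regular_pd regular_L[OF U F a] c d)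
    have rT2: "regular_on U T2" unfolding T2_def by (intro regular_pd regular_Ecomm[OF U F a] c)
    have rT3: "regular_on U T3" unfolding T3_def by (intro regular_pd regular_Ecomm[OF U _ a] F d)
    have rT12: "regular_on U (\<lambda>w. T1 w - T2 w)" by (rule regular_diff[OF U rT1 rT2])
    have eqU: "apply_vf (L a) (pd c (pd d F)) w = T1 w - T2 w - T3 w" if w: "w \<in> U" for w
    proof -
      have "apply_vf (L a) (pd c (pd d F)) w = pd c (apply_vf (L a) (pd d F)) w - T3 w"
        using comm_L[OF U regular_pd[OF F d] a c w] by (simp add: T3_def)
      also have "pd c (apply_vf (L a) (pd d F)) w = pd c (\<lambda>v. pd d (apply_vf (L a) F) v - Ecomm a d F v) w"
        by (rule pd_local[OF U _ w]) (use comm_L[OF U F a d] in simp)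
      also have "\<dots> = T1 w - T2 w"
      proof -
        have r1: "regular_on U (pd d (apply_vf (L a) F))" by (rule regular_pd[OF regular_L[OF U F a] d])
        have r2: "regular_on U (Ecomm a d F)" by (rule regular_Ecomm[OF U F a])
        show ?thesis unfolding T1_def T2_def by (rule pd_diff[OF regular_diffat[OF r1 U w] regular_diffat[OF r2 U w]])
      qed
      finally show ?thesis .
    qed
    have "applyZ (pre @ [z]) (pd c (pd d F)) y = applyZ pre (\<lambda>w. (T1 w - T2 w) - T3 w) y"
      unfolding za applyZ_append applyZ_Cons applyZ_Nil by (rule applyZ_local[OF U eqU y])
    also have "\<dots> = applyZ pre T1 y - applyZ pre T2 y - applyZ pre T3 y"
      using applyZ_diff[OF U rT12 rT3 pre y] applyZ_diff[OF U rT1 rT2 pre y] by simp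
    finally have eq: "applyZ (pre @ [z]) (pd c (pd d F)) y = applyZ pre T1 y - applyZ pre T2 y - applyZ pre T3 y" .
    have b1: "rho * \<bar>applyZ pre T1 y\<bar> \<le> 3 ^ m * T"
    proof -
      have "set (L a # zs) \<subseteq> valid_vf" using snoc.prems a by (auto simp: valid_vf_def)
      from snoc.IH[OF pre this c d] show ?thesis
        by (simp add: rho_def y_def F_def m_def T_def za T1_def)
    qed
    have z0: "(0::nat) \<in> {0,1,2}" by simp
    have zero: "rho * \<bar>applyZ pre (\<lambda>w. 0) y\<bar> \<le> 3 ^ m * T" using T0 by (simp add: applyZ_zero)
    have b2: "rho * \<bar>applyZ pre T2 y\<bar> \<le> 3 ^ m * T"
      using IHm[OF c z0] IHm[OF c a'] zero a unfolding T2_def Ecomm_def by (auto simp: pd_const_fun)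
    have b3: "rho * \<bar>applyZ pre T3 y\<bar> \<le> 3 ^ m * T"
      using IHm[OF z0 d] IHm[OF a' d] zero a unfolding T3_def Ecomm_def by auto
    have "rho * \<bar>applyZ pre T1 y - applyZ pre T2 y - applyZ pre T3 y\<bar>
        \<le> rho * \<bar>applyZ pre T1 y\<bar> + rho * \<bar>applyZ pre T2 y\<bar> + rho * \<bar>applyZ pre T3 y\<bar>"
    proof -
      have "\<bar>applyZ pre T1 y - applyZ pre T2 y - applyZ pre T3 y\<bar>
          \<le> \<bar>applyZ pre T1 y\<bar> + \<bar>applyZ pre T2 y\<bar> + \<bar>applyZ pre T3 y\<bar>"
        using abs_ge_self[of "applyZ pre T1 y"] abs_ge_minus_self[of "applyZ pre T1 y"]
          abs_ge_self[of "applyZ pre T2 y"] abs_ge_minus_self[of "applyZ pre T2 y"]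
          abs_ge_self[of "applyZ pre T3 y"] abs_ge_minus_self[of "applyZ pre T3 y"]
        by (simp add: abs_le_iff)
      from mult_left_mono[OF this rho0] show ?thesis by (simp add: distrib_left)
    qed
    then show ?thesis unfolding eq using b1 b2 b3 by simp
  qed
  then show ?case by (simp add: rho_def y_def F_def m_def T_def)
qed


lemma C_eq: "3 ^ p * Phi u y t p k
   = (6 * 2 ^ p * 3 ^ p) * normpk p k (wave u) y + (6 * 2 ^ p * 3 ^ p) * (1 / t) * normD (p + 1) (k + 1) u y"
  by (simp add: Phi_def algebra_simps)

lemma le_3p: "t > 0 \<Longrightarrow> Phi u y t p k \<le> 3 ^ p * Phi u y t p k"
  using Phi_nonneg[of t u y p k] one_le_power[of "3::real" p] mult_right_mono[of 1 "3 ^ p" "Phi u y t p k"]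
  by simp

theorem lemma7p1:
  fixes p :: nat
  shows "\<exists>C::real.
    (\<forall>s0 s1 U u k zs \<alpha> \<beta> t x1 x2.
        open U \<and> Kset s0 s1 \<subseteq> U \<and> regular_on U u \<and> k \<le> p \<and>
        set zs \<subseteq> valid_vf \<and> length zs = p \<and> nboost zs = k \<and>
        \<alpha> \<in> {0,1,2} \<and> \<beta> \<in> {0,1,2} \<and> (t, x1, x2) \<in> Kset s0 s1 \<longrightarrow>
        (sqrt (t\<^sup>2 - x1\<^sup>2 - x2\<^sup>2) / t)\<^sup>2 * \<bar>pd \<alpha> (pd \<beta> (applyZ zs u)) (t, x1, x2)\<bar>
          \<le> C * normpk p k (wave u) (t, x1, x2) + C * (1 / t) * normD (p + 1) (k + 1) u (t, x1, x2))
  \<and> (\<forall>s0 s1 U u k t x1 x2.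
        open U \<and> Kset s0 s1 \<subseteq> U \<and> regular_on U u \<and> k \<le> p \<and> (t, x1, x2) \<in> Kset s0 s1 \<longrightarrow>
        (sqrt (t\<^sup>2 - x1\<^sup>2 - x2\<^sup>2) / t)\<^sup>2 * normDD p k u (t, x1, x2)
          \<le> C * normpk p k (wave u) (t, x1, x2) + C * (1 / t) * normD (p + 1) (k + 1) u (t, x1, x2))"
proof (intro exI[of _ "6 * 2 ^ p * 3 ^ p"] conjI allI impI)
  fix s0 s1 :: real and U :: "pt set" and u :: "pt \<Rightarrow> real" and k :: nat and zs :: "vf list"
    and \<alpha> \<beta> :: nat and t x1 x2 :: real
  assume H: "open U \<and> Kset s0 s1 \<subseteq> U \<and> regular_on U u \<and> k \<le> p \<and>
        set zs \<subseteq> valid_vf \<and> length zs = p \<and> nboost zs = k \<and>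
        \<alpha> \<in> {0,1,2} \<and> \<beta> \<in> {0,1,2} \<and> (t, x1, x2) \<in> Kset s0 s1"
  then have U: "open U" and KU: "Kset s0 s1 \<subseteq> U" and u: "regular_on U u" and zs: "set zs \<subseteq> valid_vf"
    and len: "length zs = p" and nb: "nboost zs = k" and al: "\<alpha> \<in> {0,1,2}" and be: "\<beta> \<in> {0,1,2}"
    and yK: "(t, x1, x2) \<in> Kset s0 s1" by auto
  have t: "t > 0" using Kset_facts[OF yK] by simp
  have "(sqrt (t\<^sup>2 - x1\<^sup>2 - x2\<^sup>2) / t)\<^sup>2 * \<bar>pd \<alpha> (pd \<beta> (applyZ zs u)) (t, x1, x2)\<bar>
     \<le> Phi u (t, x1, x2) t p k"
    using core[OF U KU u zs yK al be] len nb by simp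
  also have "\<dots> \<le> 3 ^ p * Phi u (t, x1, x2) t p k" by (rule le_3p[OF t])
  finally show "(sqrt (t\<^sup>2 - x1\<^sup>2 - x2\<^sup>2) / t)\<^sup>2 * \<bar>pd \<alpha> (pd \<beta> (applyZ zs u)) (t, x1, x2)\<bar>
     \<le> (6 * 2 ^ p * 3 ^ p) * normpk p k (wave u) (t, x1, x2) + (6 * 2 ^ p * 3 ^ p) * (1 / t) * normD (p + 1) (k + 1) u (t, x1, x2)"
    unfolding C_eq .
next
  fix s0 s1 :: real and U :: "pt set" and u :: "pt \<Rightarrow> real" and k :: nat and t x1 x2 :: real
  assume H: "open U \<and> Kset s0 s1 \<subseteq> U \<and> regular_on U u \<and> k \<le> p \<and> (t, x1, x2) \<in> Kset s0 s1"
  then have U: "open U" and KU: "Kset s0 s1 \<subseteq> U" and u: "regular_on U u" and kp: "k \<le> p"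
    and yK: "(t, x1, x2) \<in> Kset s0 s1" by auto
  have t: "t > 0" using Kset_facts[OF yK] by simp
  define y where "y = (t, x1, x2)"
  define S where "S = (\<lambda>(a,b). normpk p k (pd a (pd b u)) y) ` ({0,1,2} \<times> {0,1,2})"
  have fS: "finite S" unfolding S_def by simp
  have "Max S \<in> S" by (rule Max_in[OF fS]) (simp add: S_def)
  then obtain ab where abm: "ab \<in> {0,1,2} \<times> {0,1,2}" and abe: "Max S = (\<lambda>(a,b). normpk p k (pd a (pd b u)) y) ab"
    unfolding S_def by (rule imageE)
  obtain a b where abp: "ab = (a, b)" by (cases ab)
  have ab: "a \<in> {0,1,2}" "b \<in> {0,1,2}" using abm abp by auto
  have eq1: "normDD p k u y = normpk p k (pd a (pd b u)) y"
  proof -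
    have "normDD p k u y = Max S" unfolding normDD_def S_def by (rule refl)
    then show ?thesis using abe abp by simp
  qed
  define R where "R = (\<lambda>zs. \<bar>applyZ zs (pd a (pd b u)) y\<bar>) ` adm p k"
  have fR: "finite R" unfolding R_def by (rule finite_imageI[OF finite_adm])
  have "Max R \<in> R" by (rule Max_in[OF fR]) (use nil_adm[of p k] in \<open>auto simp add: R_def\<close>)
  then obtain zs where zs: "zs \<in> adm p k" and zse: "Max R = \<bar>applyZ zs (pd a (pd b u)) y\<bar>"
    unfolding R_def by (rule imageE)
  have eq2: "normpk p k (pd a (pd b u)) y = \<bar>applyZ zs (pd a (pd b u)) y\<bar>"
  proof -
    have "normpk p k (pd a (pd b u)) y = Max R" unfolding normpk_def R_def by (rule refl)
    then show ?thesis using zse by simp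
  qed
  have zsv: "set zs \<subseteq> valid_vf" and zl: "length zs \<le> p" and zb: "nboost zs \<le> k" using zs by (auto simp: adm_def)
  have "(sqrt (t\<^sup>2 - x1\<^sup>2 - x2\<^sup>2) / t)\<^sup>2 * normDD p k u y
      = (sqrt (t\<^sup>2 - x1\<^sup>2 - x2\<^sup>2) / t)\<^sup>2 * \<bar>applyZ zs (pd a (pd b (applyZ [] u))) (t, x1, x2)\<bar>"
    using eq1 eq2 by (simp add: y_def)
  also have "\<dots> \<le> 3 ^ length zs * Phi u (t, x1, x2) t (length zs) (nboost zs)"
    using part2[OF U KU u yK zsv _ ab, of "[]"] by simp
  also have "\<dots> \<le> 3 ^ p * Phi u (t, x1, x2) t p k"
  proof (rule mult_mono)
    show "(3::real) ^ length zs \<le> 3 ^ p" using zl by (rule power_increasing) simp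
    show "Phi u (t, x1, x2) t (length zs) (nboost zs) \<le> Phi u (t, x1, x2) t p k" by (rule Phi_mono[OF t zl zb])
    show "(0::real) \<le> 3 ^ p" by simp
    show "0 \<le> Phi u (t, x1, x2) t (length zs) (nboost zs)" by (rule Phi_nonneg[OF t])
  qed
  finally show "(sqrt (t\<^sup>2 - x1\<^sup>2 - x2\<^sup>2) / t)\<^sup>2 * normDD p k u (t, x1, x2)
     \<le> (6 * 2 ^ p * 3 ^ p) * normpk p k (wave u) (t, x1, x2) + (6 * 2 ^ p * 3 ^ p) * (1 / t) * normD (p + 1) (k + 1) u (t, x1, x2)"
    unfolding C_eq y_def .
qed

end
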